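(* Let $f$ be a convergent power series in $\mathbf z=(z_1,\dots,z_n)$ with $f(\mathbf 0)=0$ and let $f_i=\partial f/\partial z_i$. (1) If $P\sim_J Q$ then $P\sim Q$. Conversely, if $P\sim Q$ and the face function $f_P$ contains all $n$ variables $z_1,\dots,z_n$, then $P\sim_J Q$. (2) A strictly positive weight vector $P$ is a vertex of $\Gamma^*(f)$ if and only if $\dim\Delta(P,f)=n-1$, and it is a vertex of $\Gamma_J^*(f)$ if and only if $\dim\big(\Delta(P,f)+\sum_{i=1}^n\Delta(P,f_i)\big)=n-1$, where the sum is the Minkowski sum.
   Context: For a convergent power series $g=\sum c_\nu\mathbf z^\nu$, the Newton diagram $\Gamma_+(g)$ is the convex hull of $\bigcup_{c_\nu\ne0}(\nu+\mathbb R_{\ge0}^n)$. For a weight vector $P=(p_1,\dots,p_n)\in\mathbb R_{\ge0}^n$, $d(P,g)=\min\{\sum_ip_i\nu_i:\nu\in\Gamma_+(g)\}$, $\Delta(P,g)$ is the face of $\Gamma_+(g)$ where this minimum is attained, and $g_P=\sum_{\nu\in\Delta(P,g)}c_\nu\mathbf z^\nu$. $P$ is strictly positive if all $p_i>0$. Two weight vectors are equivalent, $P\sim Q$, if $\Delta(P,f)=\Delta(Q,f)$; the equivalence classes give a rational polyhedral cone subdivision $\Gamma^*(f)$ of $\mathbb R_{\ge0}^n$ (the dual Newton diagram). They are Jacobian equivalent, $P\sim_JQ$, if $\Delta(P,f)=\Delta(Q,f)$ and $\Delta(P,f_i)=\Delta(Q,f_i)$ for all $i=1,\dots,n$; the classes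 give a finer cone subdivision $\Gamma_J^*(f)$. A vertex of a subdivision is a non-zero weight vector spanning a one-dimensional cone of it. *)

theory Defs
  imports "HOL-Analysis.Analysis"
begin

text \<open>A (formal) power series in the variables z_i, i :: 'n (a finite index type,
  n = CARD('n)), is given by its coefficient function on exponent vectors.\<close>

type_synonym 'n pseries = "('n \<Rightarrow> nat) \<Rightarrow> complex"

definition convergent_ps :: "('n::finite) pseries \<Rightarrow> bool" where
  "convergent_ps g \<longleftrightarrow>
     (\<exists>r>0. (\<lambda>\<nu>. norm (g \<nu>) * r ^ (\<Sum>i\<in>UNIV. \<nu> i)) summable_on UNIV)"

definition expo :: "('n::finite \<Rightarrow> nat) \<Rightarrow> real^'n" where
  "expo \<nu> = (\<chi> i. real (\<nu> i))"

definition nonneg_weight :: "real^'n::finite \<Rightarrow> bool" where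
  "nonneg_weight P \<longleftrightarrow> (\<forall>i. 0 \<le> P $ i)"

definition strictly_positive :: "real^'n::finite \<Rightarrow> bool" where
  "strictly_positive P \<longleftrightarrow> (\<forall>i. 0 < P $ i)"

definition newton_diagram :: "('n::finite) pseries \<Rightarrow> (real^'n) set" where
  "newton_diagram g =
     convex hull (\<Union>\<nu>\<in>{\<nu>. g \<nu> \<noteq> 0}. {expo \<nu> + x | x. \<forall>i. 0 \<le> x $ i})"

definition face :: "real^'n \<Rightarrow> ('n::finite) pseries \<Rightarrow> (real^'n) set" where
  "face P g = {x \<in> newton_diagram g. \<forall>y\<in>newton_diagram g. P \<bullet> x \<le> P \<bullet> y}"

definition face_fun :: "real^'n \<Rightarrow> ('n::finite) pseries \<Rightarrow> ('n::finite) pseries" where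
  "face_fun P g \<nu> = (if expo \<nu> \<in> face P g then g \<nu> else 0)"

definition pderiv_ps :: "'n \<Rightarrow> ('n::finite) pseries \<Rightarrow> 'n pseries" where
  "pderiv_ps i g \<nu> = of_nat (\<nu> i + 1) * g (\<nu>(i := \<nu> i + 1))"

definition weight_equiv :: "('n::finite) pseries \<Rightarrow> real^'n \<Rightarrow> real^'n \<Rightarrow> bool" where
  "weight_equiv f P Q \<longleftrightarrow> face P f = face Q f"

definition jacobian_equiv :: "('n::finite) pseries \<Rightarrow> real^'n \<Rightarrow> real^'n \<Rightarrow> bool" where
  "jacobian_equiv f P Q \<longleftrightarrow>
     face P f = face Q f \<and> (\<forall>i. face P (pderiv_ps i f) = face Q (pderiv_ps i f))"

text \<open>Equivalence class of Q in the nonnegative orthant; the cones of the subdivision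
  are the closures of these classes.\<close>
definition equiv_class :: "(real^'n \<Rightarrow> real^'n \<Rightarrow> bool) \<Rightarrow> real^'n \<Rightarrow> (real^'n::finite) set" where
  "equiv_class R Q = {S. nonneg_weight S \<and> R S Q}"

definition subdivision_vertex :: "(real^'n \<Rightarrow> real^'n \<Rightarrow> bool) \<Rightarrow> real^'n::finite \<Rightarrow> bool" where
  "subdivision_vertex R P \<longleftrightarrow> P \<noteq> 0 \<and> nonneg_weight P \<and>
     (\<exists>Q. nonneg_weight Q \<and> closure (equiv_class R Q) = {t *\<^sub>R P | t. 0 \<le> t})"

definition jacobian_face_sum :: "real^'n \<Rightarrow> ('n::finite) pseries \<Rightarrow> (real^'n) set" where
  "jacobian_face_sum P f =
     {x + (\<Sum>i\<in>UNIV. y i) | x y. x \<in> face P f \<and> (\<forall>i. y i \<in> face P (pderiv_ps i f))}"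

end

theory Submission
  imports Defs
begin

definition minset :: "real^'n \<Rightarrow> ('n::finite) pseries \<Rightarrow> ('n \<Rightarrow> nat) set" where
 "minset S g = {\<nu>. g \<nu> \<noteq> 0 \<and> (\<forall>\<mu>. g \<mu> \<noteq> 0 \<longrightarrow> S \<bullet> expo \<nu> \<le> S \<bullet> expo \<mu>)}"

lemma inner_expo: "S \<bullet> expo \<nu> = (\<Sum>i\<in>UNIV. S$i * real (\<nu> i))"
  by (simp add: inner_vec_def expo_def)

lemma nd_inc: "g \<nu> \<noteq> 0 \<Longrightarrow> (\<forall>i. 0 \<le> x$i) \<Longrightarrow> expo \<nu> + x \<in> newton_diagram g"
  unfolding newton_diagram_def by (rule hull_inc) blast

lemma nd_inc0: "g \<nu> \<noteq> 0 \<Longrightarrow> expo \<nu> \<in> newton_diagram g"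
  using nd_inc[of g \<nu> 0] by simp

lemma nd_shift:
  assumes "y \<in> newton_diagram g" "\<forall>i. 0 \<le> x$i"
  shows "x + y \<in> newton_diagram g"
proof -
  let ?U = "(\<Union>\<nu>\<in>{\<nu>. g \<nu> \<noteq> 0}. {expo \<nu> + x | x. \<forall>i. 0 \<le> x $ i})"
  have "(+) x ` ?U \<subseteq> ?U"
  proof
    fix u assume "u \<in> (+) x ` ?U"
    then obtain \<nu> z where u: "u = x + (expo \<nu> + z)" "g \<nu> \<noteq> 0" "\<forall>i. 0 \<le> z$i" by blast
    have "u = expo \<nu> + (z + x)" using u by (simp add: algebra_simps)
    moreover have "\<forall>i. 0 \<le> (z + x)$i" using u(3) assms(2) by simp
    ultimately show "u \<in> ?U" using u(2) by blast
  qed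
  hence "convex hull ((+) x ` ?U) \<subseteq> convex hull ?U" by (rule hull_mono)
  then have "(+) x ` (convex hull ?U) \<subseteq> convex hull ?U" by (simp add: convex_hull_translation)
  thus ?thesis using assms(1) unfolding newton_diagram_def by blast
qed

lemma inner_nonneg_vec: "(\<forall>i. 0 \<le> S$i) \<Longrightarrow> (\<forall>i. 0 \<le> x$i) \<Longrightarrow> 0 \<le> S \<bullet> (x::real^'n::finite)"
  by (simp add: inner_vec_def sum_nonneg)

lemma nd_lower:
  assumes "\<forall>\<nu>. g \<nu> \<noteq> 0 \<longrightarrow> c \<le> S \<bullet> expo \<nu>" "nonneg_weight S" "y \<in> newton_diagram g"
  shows "c \<le> S \<bullet> y"
proof -
  let ?U = "(\<Union>\<nu>\<in>{\<nu>. g \<nu> \<noteq> 0}. {expo \<nu> + x | x. \<forall>i. 0 \<le> x $ i})"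
  have "?U \<subseteq> {y. c \<le> S \<bullet> y}"
  proof
    fix u assume "u \<in> ?U"
    then obtain \<nu> z where u: "u = expo \<nu> + z" "g \<nu> \<noteq> 0" "\<forall>i. 0 \<le> z$i" by blast
    have "0 \<le> S \<bullet> z" using u(3) assms(2) inner_nonneg_vec unfolding nonneg_weight_def by blast
    moreover have "c \<le> S \<bullet> expo \<nu>" using assms(1) u(2) by blast
    ultimately show "u \<in> {y. c \<le> S \<bullet> y}" using u(1) by (simp add: inner_add_right)
  qed
  hence "convex hull ?U \<subseteq> {y. c \<le> S \<bullet> y}"
    by (rule hull_minimal) (simp add: convex_halfspace_ge)
  thus ?thesis using assms(3) unfolding newton_diagram_def by blast
qed

lemma nd_zero: "newton_diagram (\<lambda>_. 0) = {}"
  unfolding newton_diagram_def by simp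

lemma face_zero_fun: "face S (\<lambda>_. 0) = {}"
  unfolding face_def by (simp add: nd_zero)

lemma face_scale: "0 < t \<Longrightarrow> face (t *\<^sub>R P) g = face P g"
  unfolding face_def by (auto simp: inner_scaleR_left)

lemma face_zero_weight: "face 0 g = newton_diagram g"
  unfolding face_def by simp

lemma expo_upd: "expo (\<mu>(i := \<mu> i + 1)) = axis i 1 + expo \<mu>"
  by (simp add: vec_eq_iff expo_def axis_def)

lemma deriv_nd:
  assumes "x \<in> newton_diagram (pderiv_ps i f)"
  shows "axis i 1 + x \<in> newton_diagram f"
proof -
  let ?U = "(\<Union>\<nu>\<in>{\<nu>. pderiv_ps i f \<nu> \<noteq> 0}. {expo \<nu> + x | x. \<forall>i. 0 \<le> x $ i})"
  let ?V = "(\<Union>\<nu>\<in>{\<nu>. f \<nu> \<noteq> 0}. {expo \<nu> + x | x. \<forall>i. 0 \<le> x $ i})"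
  have "(+) (axis i 1) ` ?U \<subseteq> ?V"
  proof
    fix u assume "u \<in> (+) (axis i 1) ` ?U"
    then obtain \<nu> z where u: "u = axis i 1 + (expo \<nu> + z)" "pderiv_ps i f \<nu> \<noteq> 0" "\<forall>i. 0 \<le> z$i" by blast
    have "f (\<nu>(i := \<nu> i + 1)) \<noteq> 0" using u(2) by (simp add: pderiv_ps_def)
    moreover have "u = expo (\<nu>(i := \<nu> i + 1)) + z" by (subst expo_upd) (simp add: u(1) algebra_simps)
    ultimately show "u \<in> ?V" using u(3) by blast
  qed
  hence "convex hull ((+) (axis i 1) ` ?U) \<subseteq> convex hull ?V" by (rule hull_mono)
  then have "(+) (axis i 1) ` (convex hull ?U) \<subseteq> convex hull ?V" by (simp add: convex_hull_translation)
  thus ?thesis using assms unfolding newton_diagram_def by blast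
qed

lemma face_deriv:
  assumes "f \<nu> \<noteq> 0" "expo \<nu> \<in> face P f" "0 < \<nu> i"
  shows "face P (pderiv_ps i f) = {x \<in> newton_diagram (pderiv_ps i f). axis i 1 + x \<in> face P f}"
proof -
  define \<mu> where "\<mu> = \<nu>(i := \<nu> i - 1)"
  have nu: "\<nu> = \<mu>(i := \<mu> i + 1)" using assms(3) by (auto simp: \<mu>_def)
  have m1: "\<mu> i + 1 = \<nu> i" using assms(3) by (simp add: \<mu>_def)
  have "pderiv_ps i f \<mu> = of_nat (\<nu> i) * f \<nu>" unfolding pderiv_ps_def m1 using nu by simp
  hence "pderiv_ps i f \<mu> \<noteq> 0" using assms(1,3) by simp
  hence muin: "expo \<mu> \<in> newton_diagram (pderiv_ps i f)" by (rule nd_inc0)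
  have enu: "expo \<nu> = axis i 1 + expo \<mu>" using nu expo_upd by metis
  show ?thesis
  proof (intro set_eqI iffI)
    fix x assume x: "x \<in> face P (pderiv_ps i f)"
    hence xin: "x \<in> newton_diagram (pderiv_ps i f)" and le: "P \<bullet> x \<le> P \<bullet> expo \<mu>"
      using muin unfolding face_def by auto
    have "axis i 1 + x \<in> face P f"
      unfolding face_def
    proof (intro CollectI conjI ballI)
      show "axis i 1 + x \<in> newton_diagram f" using xin by (rule deriv_nd)
      fix z assume "z \<in> newton_diagram f"
      hence "P \<bullet> expo \<nu> \<le> P \<bullet> z" using assms(2) unfolding face_def by auto
      thus "P \<bullet> (axis i 1 + x) \<le> P \<bullet> z" using le enu by (simp add: inner_add_right)
    qed
    thus "x \<in> {x \<in> newton_diagram (pderiv_ps i f). axis i 1 + x \<in> face P f}" using xin by blast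
  next
    fix x assume "x \<in> {x \<in> newton_diagram (pderiv_ps i f). axis i 1 + x \<in> face P f}"
    hence xin: "x \<in> newton_diagram (pderiv_ps i f)" and xf: "axis i 1 + x \<in> face P f" by auto
    show "x \<in> face P (pderiv_ps i f)"
      unfolding face_def
    proof (intro CollectI conjI ballI)
      show "x \<in> newton_diagram (pderiv_ps i f)" by fact
      fix y assume "y \<in> newton_diagram (pderiv_ps i f)"
      hence "axis i 1 + y \<in> newton_diagram f" by (rule deriv_nd)
      hence "P \<bullet> (axis i 1 + x) \<le> P \<bullet> (axis i 1 + y)" using xf unfolding face_def by auto
      thus "P \<bullet> x \<le> P \<bullet> y" by (simp add: inner_add_right)
    qed
  qed
qed

lemma part1:
  "(jacobian_equiv f P Q \<longrightarrow> weight_equiv f P Q) \<and>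
   (weight_equiv f P Q \<and> (\<forall>i. \<exists>\<nu>. face_fun P f \<nu> \<noteq> 0 \<and> 0 < \<nu> i) \<longrightarrow> jacobian_equiv f P Q)"
proof (intro conjI impI)
  show "jacobian_equiv f P Q \<Longrightarrow> weight_equiv f P Q"
    by (simp add: jacobian_equiv_def weight_equiv_def)
next
  assume a: "weight_equiv f P Q \<and> (\<forall>i. \<exists>\<nu>. face_fun P f \<nu> \<noteq> 0 \<and> 0 < \<nu> i)"
  hence eq: "face P f = face Q f" by (simp add: weight_equiv_def)
  have "face P (pderiv_ps i f) = face Q (pderiv_ps i f)" for i
  proof -
    obtain \<nu> where "face_fun P f \<nu> \<noteq> 0" "0 < \<nu> i" using a by blast
    hence h: "f \<nu> \<noteq> 0" "expo \<nu> \<in> face P f" "0 < \<nu> i"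
      by (auto simp: face_fun_def split: if_splits)
    show ?thesis using face_deriv[OF h] face_deriv[of f \<nu> Q i] h eq by simp
  qed
  thus "jacobian_equiv f P Q" using eq by (simp add: jacobian_equiv_def)
qed

lemma finite_below:
  assumes "strictly_positive S"
  shows "finite {\<nu>::'n::finite\<Rightarrow>nat. S \<bullet> expo \<nu> \<le> c}"
proof -
  define B where "B i = nat \<lceil>c / S$i\<rceil>" for i
  have "{\<nu>::'n\<Rightarrow>nat. S \<bullet> expo \<nu> \<le> c} \<subseteq> PiE UNIV (\<lambda>i. {..B i})"
  proof
    fix \<nu> :: "'n \<Rightarrow> nat" assume "\<nu> \<in> {\<nu>. S \<bullet> expo \<nu> \<le> c}"
    hence le: "(\<Sum>i\<in>UNIV. S$i * real (\<nu> i)) \<le> c" by (simp add: inner_expo)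
    have "\<nu> i \<le> B i" for i
    proof -
      have pos: "0 < S$i" using assms by (simp add: strictly_positive_def)
      have "S$i * real (\<nu> i) \<le> (\<Sum>i\<in>UNIV. S$i * real (\<nu> i))"
        by (rule member_le_sum) (use assms in \<open>auto simp: strictly_positive_def less_imp_le\<close>)
      hence "S$i * real (\<nu> i) \<le> c" using le by linarith
      hence "real (\<nu> i) \<le> c / S$i" using pos by (simp add: field_simps)
      hence "real (\<nu> i) \<le> real_of_int \<lceil>c / S$i\<rceil>" by linarith
      thus ?thesis unfolding B_def by linarith
    qed
    thus "\<nu> \<in> PiE UNIV (\<lambda>i. {..B i})" by (simp add: PiE_iff extensional_UNIV)
  qed
  moreover have "finite (PiE UNIV (\<lambda>i. {..B i}))" by (rule finite_PiE) auto
  ultimately show ?thesis by (rule finite_subset)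
qed

lemma minset_ne:
  assumes "strictly_positive S" "g \<nu>0 \<noteq> 0"
  shows "minset S g \<noteq> {}" "finite (minset S g)"
proof -
  define A where "A = {\<nu>. g \<nu> \<noteq> 0 \<and> S \<bullet> expo \<nu> \<le> S \<bullet> expo \<nu>0}"
  have finA: "finite A" unfolding A_def
    by (rule finite_subset[OF _ finite_below[OF assms(1), of "S \<bullet> expo \<nu>0"]]) auto
  have "\<nu>0 \<in> A" using assms(2) by (simp add: A_def)
  hence neA: "(\<lambda>\<nu>. S \<bullet> expo \<nu>) ` A \<noteq> {}" by blast
  define d where "d = Min ((\<lambda>\<nu>. S \<bullet> expo \<nu>) ` A)"
  have "d \<in> (\<lambda>\<nu>. S \<bullet> expo \<nu>) ` A" unfolding d_def using finA neA by (intro Min_in) auto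
  then obtain m where m: "m \<in> A" "S \<bullet> expo m = d" by auto
  have dle: "d \<le> S \<bullet> expo a" if "a \<in> A" for a
    unfolding d_def using finA that by (intro Min_le) auto
  have "m \<in> minset S g"
    unfolding minset_def
  proof (intro CollectI conjI allI impI)
    show "g m \<noteq> 0" using m(1) by (simp add: A_def)
    fix \<mu> assume "g \<mu> \<noteq> 0"
    show "S \<bullet> expo m \<le> S \<bullet> expo \<mu>"
    proof (cases "S \<bullet> expo \<mu> \<le> S \<bullet> expo \<nu>0")
      case True thus ?thesis using \<open>g \<mu> \<noteq> 0\<close> dle m(2) by (simp add: A_def)
    next
      case False thus ?thesis using m(1) by (simp add: A_def)
    qed
  qed
  thus "minset S g \<noteq> {}" by blast
  have "minset S g \<subseteq> A" unfolding minset_def A_def using assms(2) by auto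
  thus "finite (minset S g)" using finA by (rule finite_subset)
qed

lemma convex_nd: "convex (newton_diagram g)"
  unfolding newton_diagram_def by (rule convex_convex_hull)

lemma face_sp:
  assumes sp: "strictly_positive S"
  shows "face S g = convex hull (expo ` minset S g)"
proof (cases "\<exists>\<nu>. g \<nu> \<noteq> 0")
  case False
  hence "g = (\<lambda>_. 0)" by auto
  thus ?thesis by (simp add: face_zero_fun minset_def)
next
  case True
  then obtain \<nu>0 where "g \<nu>0 \<noteq> 0" by blast
  then obtain m0 where m0: "m0 \<in> minset S g" using minset_ne[OF sp] by blast
  define d where "d = S \<bullet> expo m0"
  define E where "E = expo ` minset S g"
  have nn: "nonneg_weight S" using sp by (auto simp: nonneg_weight_def strictly_positive_def less_imp_le)
  have lowg: "\<forall>\<nu>. g \<nu> \<noteq> 0 \<longrightarrow> d \<le> S \<bullet> expo \<nu>" using m0 by (simp add: minset_def d_def)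
  have low: "d \<le> S \<bullet> y" if "y \<in> newton_diagram g" for y
    using nd_lower[OF lowg nn that] .
  have Ed: "S \<bullet> e = d" if "e \<in> E" for e
  proof -
    obtain m where m: "m \<in> minset S g" "e = expo m" using \<open>e \<in> E\<close> E_def by blast
    thus ?thesis using m0 unfolding d_def minset_def by (auto intro: order.antisym)
  qed
  have EG: "E \<subseteq> newton_diagram g" unfolding E_def minset_def using nd_inc0 by blast
  have hEG: "convex hull E \<subseteq> newton_diagram g"
    using EG convex_nd by (rule hull_minimal)
  have hEd: "convex hull E \<subseteq> {x. S \<bullet> x = d}"
    using Ed by (intro hull_minimal) (auto simp: convex_hyperplane)
  have m0G: "expo m0 \<in> newton_diagram g" using m0 EG E_def by blast
  show ?thesis unfolding E_def[symmetric]
  proof (intro set_eqI iffI)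
    fix x assume "x \<in> convex hull E"
    thus "x \<in> face S g" using hEG hEd low unfolding face_def by fastforce
  next
    fix x assume x: "x \<in> face S g"
    hence xG: "x \<in> newton_diagram g" and xd: "S \<bullet> x \<le> d"
      using m0G unfolding face_def d_def by auto
    let ?U = "(\<Union>\<nu>\<in>{\<nu>. g \<nu> \<noteq> 0}. {expo \<nu> + x | x. \<forall>i. 0 \<le> x $ i})"
    define U2 where "U2 = ?U - E"
    have EU: "E \<subseteq> ?U"
    proof
      fix e assume "e \<in> E"
      then obtain m where "m \<in> minset S g" "e = expo m" using E_def by blast
      thus "e \<in> ?U" unfolding minset_def by (intro UN_I[of m]) (auto intro: exI[of _ 0])
    qed
    have UE: "?U = E \<union> U2" using EU U2_def by blast
    have U2gt: "d < S \<bullet> u" if "u \<in> U2" for u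
    proof -
      obtain \<nu> z where u: "u = expo \<nu> + z" "g \<nu> \<noteq> 0" "\<forall>i. 0 \<le> z$i" "u \<notin> E"
        using \<open>u \<in> U2\<close> U2_def by blast
      have z0: "0 \<le> S \<bullet> z" using u(3) nn inner_nonneg_vec unfolding nonneg_weight_def by blast
      show ?thesis
      proof (cases "\<nu> \<in> minset S g")
        case True
        hence "z \<noteq> 0" using u(1,4) E_def by auto
        then obtain i where "z$i \<noteq> 0" by (auto simp: vec_eq_iff)
        hence zi: "0 < z$i" using u(3) by (metis order_le_less)
        have "0 < S \<bullet> z" unfolding inner_vec_def
          by (rule sum_pos2[of _ i]) (use sp zi u(3) in \<open>auto simp: strictly_positive_def less_imp_le\<close>)
        moreover have "S \<bullet> expo \<nu> = d" using Ed True E_def by blast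
        ultimately show ?thesis using u(1) by (simp add: inner_add_right)
      next
        case False
        then obtain \<mu> where "g \<mu> \<noteq> 0" "S \<bullet> expo \<mu> < S \<bullet> expo \<nu>"
          using u(2) unfolding minset_def by force
        hence "d < S \<bullet> expo \<nu>" using lowg by force
        thus ?thesis using z0 u(1) by (simp add: inner_add_right)
      qed
    qed
    show "x \<in> convex hull E"
    proof (cases "U2 = {}")
      case True
      thus ?thesis using xG UE unfolding newton_diagram_def by simp
    next
      case False
      have "E \<noteq> {}" using m0 E_def by blast
      have "x \<in> convex hull (convex hull E \<union> convex hull U2)"
        using xG UE unfolding newton_diagram_def by (metis hull_Un_left hull_Un_right)
      also have "\<dots> = {u *\<^sub>R s + v *\<^sub>R t |u v s t.
        0 \<le> u \<and> 0 \<le> v \<and> u + v = 1 \<and> s \<in> convex hull E \<and> t \<in> convex hull U2}"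
        by (rule convex_hull_union_two) (use \<open>E \<noteq> {}\<close> False in auto)
      finally obtain u v s t where uv: "x = u *\<^sub>R s + v *\<^sub>R t" "0 \<le> u" "0 \<le> v" "u + v = 1"
        "s \<in> convex hull E" "t \<in> convex hull U2" by blast
      have sd: "S \<bullet> s = d" using hEd uv(5) by blast
      have "convex hull U2 \<subseteq> {x. d < S \<bullet> x}"
        using U2gt by (intro hull_minimal) (auto simp: convex_halfspace_gt)
      hence td: "d < S \<bullet> t" using uv(6) by blast
      have Sx: "S \<bullet> x = u * d + v * (S \<bullet> t)" using uv(1) sd by (simp add: inner_add_right)
      have "v = 0"
      proof (rule ccontr)
        assume "v \<noteq> 0" hence "0 < v" using uv(3) by simp
        hence "v * d < v * (S \<bullet> t)" using td by simp
        have "d * u + d * v = d" using uv(4) by (metis mult.right_neutral distrib_left)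
        hence "S \<bullet> x = d + (v * (S \<bullet> t) - v * d)" using Sx by (simp add: algebra_simps)
        hence "d < S \<bullet> x" using \<open>v * d < v * (S \<bullet> t)\<close> by linarith
        thus False using xd by simp
      qed
      hence "x = s" using uv by simp
      thus ?thesis using uv(5) by simp
    qed
  qed
qed

lemma tendsto_id_nhds: "((\<lambda>x. x) \<longlongrightarrow> a) (nhds a)"
  by (rule filterlim_ident)

lemma ev_coord: fixes P :: "real^'n::finite" shows "0 < P$i \<Longrightarrow> \<forall>\<^sub>F S in nhds P. P$i / 2 < S$i"
  by (rule order_tendstoD(1)[OF tendsto_vec_nth[OF tendsto_id_nhds]]) simp

lemma ev_inner_lt: "P \<bullet> v < c \<Longrightarrow> \<forall>\<^sub>F S in nhds P. S \<bullet> v < c"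
  by (rule order_tendstoD(2)[OF tendsto_inner[OF tendsto_id_nhds tendsto_const]])

lemma ev_inner_gt: "c < P \<bullet> v \<Longrightarrow> \<forall>\<^sub>F S in nhds P. c < S \<bullet> v"
  by (rule order_tendstoD(1)[OF tendsto_inner[OF tendsto_id_nhds tendsto_const]])

lemma ev_sp:
  assumes "strictly_positive P"
  shows "\<forall>\<^sub>F S in nhds P. \<forall>i. P$i / 2 < S$i"
  using assms by (intro eventually_all_finite ev_coord) (simp add: strictly_positive_def)

lemma half_bound:
  assumes "\<forall>i. P$i / 2 < S$i" "strictly_positive P"
  shows "(P \<bullet> expo \<nu>) / 2 \<le> S \<bullet> expo \<nu>"
proof -
  have "(P \<bullet> expo \<nu>) / 2 = (\<Sum>i\<in>UNIV. (P$i/2) * real (\<nu> i))"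
    by (simp add: inner_expo sum_divide_distrib)
  also have "\<dots> \<le> (\<Sum>i\<in>UNIV. S$i * real (\<nu> i))"
  proof (rule sum_mono)
    fix i
    have "P$i/2 \<le> S$i" using assms(1) less_imp_le by blast
    thus "P $ i / 2 * real (\<nu> i) \<le> S $ i * real (\<nu> i)" by (rule mult_right_mono) simp
  qed
  finally show ?thesis by (simp add: inner_expo)
qed

lemma minset_local:
  assumes sp: "strictly_positive P"
  shows "\<forall>\<^sub>F S in nhds P. strictly_positive S \<and> minset S g \<subseteq> minset P g"
proof (cases "\<exists>\<nu>. g \<nu> \<noteq> 0")
  case False
  have "\<forall>\<^sub>F S in nhds P. \<forall>i. P$i / 2 < S$i" by (rule ev_sp[OF sp])
  thus ?thesis
  proof (rule eventually_mono)
    fix S assume "\<forall>i. P $ i / 2 < S $ i"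
    hence "strictly_positive S" using sp unfolding strictly_positive_def
      by (meson half_gt_zero less_trans)
    thus "strictly_positive S \<and> minset S g \<subseteq> minset P g" using False by (simp add: minset_def)
  qed
next
  case True
  then obtain \<nu>0 where "g \<nu>0 \<noteq> 0" by blast
  then obtain m0 where m0: "m0 \<in> minset P g" using minset_ne[OF sp] by blast
  define d where "d = P \<bullet> expo m0"
  have lowg: "\<forall>\<nu>. g \<nu> \<noteq> 0 \<longrightarrow> d \<le> P \<bullet> expo \<nu>" using m0 by (simp add: minset_def d_def)
  define V where "V = {\<nu>. P \<bullet> expo \<nu> \<le> 2 * (d + 1)} \<inter> {\<nu>. g \<nu> \<noteq> 0} - minset P g"
  have finV: "finite V" unfolding V_def using finite_below[OF sp] by blast
  have E1: "\<forall>\<^sub>F S in nhds P. \<forall>i. P$i / 2 < S$i" by (rule ev_sp[OF sp])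
  have E2: "\<forall>\<^sub>F S in nhds P. S \<bullet> expo m0 < d + 1" by (rule ev_inner_lt) (simp add: d_def)
  have E3: "\<forall>\<^sub>F S in nhds P. \<forall>\<nu>\<in>V. 0 < S \<bullet> (expo \<nu> - expo m0)"
  proof (rule eventually_ball_finite[OF finV], rule ballI)
    fix \<nu> assume "\<nu> \<in> V"
    hence "g \<nu> \<noteq> 0" "\<nu> \<notin> minset P g" by (auto simp: V_def)
    then obtain \<mu> where "g \<mu> \<noteq> 0" "P \<bullet> expo \<mu> < P \<bullet> expo \<nu>" unfolding minset_def by force
    hence "d < P \<bullet> expo \<nu>" using lowg by force
    hence "0 < P \<bullet> (expo \<nu> - expo m0)" by (simp add: inner_diff_right d_def)
    thus "\<forall>\<^sub>F S in nhds P. 0 < S \<bullet> (expo \<nu> - expo m0)" by (rule ev_inner_gt)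
  qed
  show ?thesis using E1 E2 E3
  proof (eventually_elim)
    case (elim S)
    have spS: "strictly_positive S" using sp elim(1) unfolding strictly_positive_def
      by (meson half_gt_zero less_trans)
    have "minset S g \<subseteq> minset P g"
    proof
      fix \<nu> assume nS: "\<nu> \<in> minset S g"
      show "\<nu> \<in> minset P g"
      proof (rule ccontr)
        assume nP: "\<nu> \<notin> minset P g"
        have gn: "g \<nu> \<noteq> 0" using nS by (simp add: minset_def)
        have le: "S \<bullet> expo \<nu> \<le> S \<bullet> expo m0" using nS m0 by (simp add: minset_def)
        show False
        proof (cases "P \<bullet> expo \<nu> \<le> 2 * (d + 1)")
          case True
          hence "\<nu> \<in> V" using gn nP by (simp add: V_def)
          hence "0 < S \<bullet> (expo \<nu> - expo m0)" using elim(3) by blast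
          thus False using le by (simp add: inner_diff_right)
        next
          case False
          have "(P \<bullet> expo \<nu>) / 2 \<le> S \<bullet> expo \<nu>" by (rule half_bound[OF elim(1) sp])
          moreover have "d + 1 < (P \<bullet> expo \<nu>) / 2" using False by simp
          ultimately show False using le elim(2) by linarith
        qed
      qed
    qed
    thus ?case using spS by blast
  qed
qed

lemma minset_eq:
  assumes "strictly_positive S" "minset S g \<subseteq> minset P g"
    "\<forall>a\<in>minset P g. \<forall>b\<in>minset P g. S \<bullet> expo a = S \<bullet> expo b"
  shows "minset S g = minset P g"
proof (cases "\<exists>\<nu>. g \<nu> \<noteq> 0")
  case False thus ?thesis by (simp add: minset_def)
next
  case True
  then obtain \<nu>0 where "g \<nu>0 \<noteq> 0" by blast
  then obtain a where a: "a \<in> minset S g" using minset_ne[OF assms(1)] by blast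
  have "minset P g \<subseteq> minset S g"
  proof
    fix b assume b: "b \<in> minset P g"
    have "S \<bullet> expo b = S \<bullet> expo a" using assms(2,3) a b by blast
    thus "b \<in> minset S g" using a b unfolding minset_def by auto
  qed
  thus ?thesis using assms(2) by blast
qed

lemma orth_span:
  assumes "\<forall>x\<in>A. \<forall>y\<in>B. x \<bullet> y = 0"
  shows "\<forall>x\<in>span A. \<forall>y\<in>span B. x \<bullet> (y::'a::euclidean_space) = 0"
proof -
  have "B \<subseteq> {y. \<forall>x\<in>A. orthogonal x y}" using assms by (auto simp: orthogonal_def)
  hence sB: "span B \<subseteq> {y. \<forall>x\<in>A. orthogonal x y}"
    by (rule span_minimal) (rule subspace_orthogonal_to_vectors)
  have "A \<subseteq> {x. \<forall>y\<in>span B. orthogonal y x}"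
  proof (intro subsetI CollectI ballI)
    fix x y assume "x \<in> A" "y \<in> span B"
    hence "orthogonal x y" using sB by blast
    thus "orthogonal y x" by (simp add: orthogonal_def inner_commute)
  qed
  hence "span A \<subseteq> {x. \<forall>y\<in>span B. orthogonal y x}"
    by (rule span_minimal) (rule subspace_orthogonal_to_vectors)
  show ?thesis
  proof (intro ballI)
    fix x y assume "x \<in> span A" "y \<in> span B"
    hence "orthogonal y x" using \<open>span A \<subseteq> _\<close> by blast
    thus "x \<bullet> y = 0" by (simp add: orthogonal_def inner_commute)
  qed
qed

lemma orth_dim:
  fixes A B :: "(real^'n::finite) set"
  assumes "\<forall>x\<in>A. \<forall>y\<in>B. x \<bullet> y = 0"
  shows "dim A + dim B \<le> CARD('n)"
proof -
  have o: "\<forall>x\<in>span A. \<forall>y\<in>span B. x \<bullet> y = 0" using orth_span[OF assms] .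
  have sub: "span A \<inter> span B \<subseteq> {0}"
  proof
    fix x assume "x \<in> span A \<inter> span B"
    hence "x \<bullet> x = 0" using o by blast
    thus "x \<in> {0}" by simp
  qed
  have "dim (span A \<inter> span B) \<le> dim {0::real^'n}" by (rule dim_subset[OF sub])
  hence d0: "dim (span A \<inter> span B) = 0" by simp
  have ds: "dim {x + y |x y. x \<in> span A \<and> y \<in> span B} + dim (span A \<inter> span B) = dim (span A) + dim (span B)"
    by (rule dim_sums_Int) (auto simp: subspace_span)
  have du: "dim {x + y |x y. x \<in> span A \<and> y \<in> span B} \<le> CARD('n)" by (rule dim_subset_UNIV_cart)
  show ?thesis using d0 ds du unfolding dim_span by linarith
qed

lemma ray_closure:
  fixes P :: "real^'n::finite"
  assumes "P \<noteq> 0"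
  shows "closure {t *\<^sub>R P | t. 0 < t} = {t *\<^sub>R P | t. 0 \<le> t}"
proof -
  have lin: "linear (\<lambda>t::real. t *\<^sub>R P)" by (rule linear_scale_left)
  have inj: "inj (\<lambda>t::real. t *\<^sub>R P)" using assms by (auto simp: inj_on_def scaleR_cancel_right)
  have "closure ((\<lambda>t. t *\<^sub>R P) ` {0<..}) = (\<lambda>t. t *\<^sub>R P) ` closure {0<..}"
    by (rule closure_injective_linear_image[OF lin inj, symmetric])
  also have "\<dots> = (\<lambda>t. t *\<^sub>R P) ` {0..}" by simp
  finally have "closure ((\<lambda>t. t *\<^sub>R P) ` {0<..}) = (\<lambda>t. t *\<^sub>R P) ` {0..}" .
  moreover have "{t *\<^sub>R P | t. 0 < t} = (\<lambda>t. t *\<^sub>R P) ` {0<..}" by auto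
  moreover have "{t *\<^sub>R P | t. 0 \<le> t} = (\<lambda>t. t *\<^sub>R P) ` {0..}" by auto
  ultimately show ?thesis by simp
qed

lemma face_nonempty:
  assumes "strictly_positive P" "g \<nu>0 \<noteq> 0"
  shows "face P g \<noteq> {}"
  using minset_ne(1)[of P g \<nu>0] assms face_sp[OF assms(1)] by auto

lemma minset_in_face:
  assumes "strictly_positive P" "a \<in> minset P g"
  shows "expo a \<in> face P g"
  using face_sp[OF assms(1)] assms(2) by (simp add: hull_inc)

lemma sp_of_face:
  assumes sp: "strictly_positive P" and g0: "g \<nu>0 \<noteq> 0" and nn: "nonneg_weight S"
    and eq: "face S g = face P g"
  shows "strictly_positive S"
  unfolding strictly_positive_def
proof
  fix i
  show "0 < S$i"
  proof (rule ccontr)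
    assume "\<not> 0 < S$i"
    hence Si: "S$i = 0" using nn unfolding nonneg_weight_def by (metis order_le_less)
    obtain x where x: "x \<in> face S g" using face_nonempty[of P g \<nu>0, OF sp g0] eq by blast
    have xG: "x \<in> newton_diagram g" using x by (simp add: face_def)
    have "axis i 1 + x \<in> newton_diagram g"
      using nd_shift[OF xG, of "axis i 1"] by (simp add: axis_def)
    moreover have "S \<bullet> (axis i 1 + x) = S \<bullet> x" using Si by (simp add: inner_add_right inner_axis)
    ultimately have "axis i 1 + x \<in> face S g" using x by (simp add: face_def)
    hence "P \<bullet> (axis i 1 + x) \<le> P \<bullet> x" using eq xG by (auto simp: face_def)
    hence "P$i \<le> 0" by (simp add: inner_add_right inner_axis)
    thus False using sp by (simp add: strictly_positive_def not_le[symmetric])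
  qed
qed

lemma zero_of_face:
  assumes g0: "g \<nu>0 \<noteq> 0" and nn: "nonneg_weight S"
    and eq: "face S g = face 0 g"
  shows "S = 0"
proof -
  have "S$i = 0" for i
  proof -
    have xG: "expo \<nu>0 \<in> newton_diagram g" using g0 by (rule nd_inc0)
    have "axis i 1 + expo \<nu>0 \<in> newton_diagram g"
      using nd_shift[OF xG, of "axis i 1"] by (simp add: axis_def)
    hence "axis i 1 + expo \<nu>0 \<in> face S g" using eq by (simp add: face_zero_weight)
    hence "S \<bullet> (axis i 1 + expo \<nu>0) \<le> S \<bullet> expo \<nu>0" using xG by (auto simp: face_def)
    hence "S$i \<le> 0" by (simp add: inner_add_right inner_axis)
    thus ?thesis using nn by (simp add: nonneg_weight_def order.antisym)
  qed
  thus ?thesis by (simp add: vec_eq_iff)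
qed

lemma perp_P:
  assumes "a \<in> minset P g" "b \<in> minset P g"
  shows "P \<bullet> (expo a - expo b) = 0"
  using assms unfolding minset_def by (auto simp: inner_diff_right intro: order.antisym)

lemma perp_S:
  assumes sp: "strictly_positive P" and "face S g = face P g" "a \<in> minset P g" "b \<in> minset P g"
  shows "S \<bullet> (expo a - expo b) = 0"
proof -
  have "expo a \<in> face S g" "expo b \<in> face S g" using assms minset_in_face[OF sp] by auto
  hence "S \<bullet> expo a \<le> S \<bullet> expo b" "S \<bullet> expo b \<le> S \<bullet> expo a" unfolding face_def by auto
  thus ?thesis by (simp add: inner_diff_right)
qed

definition gens :: "real^'n \<Rightarrow> ('k \<Rightarrow> ('n::finite) pseries) \<Rightarrow> (real^'n) set" where
  "gens P gs = (\<Union>k. {expo a - expo b | a b. a \<in> minset P (gs k) \<and> b \<in> minset P (gs k)})"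

lemma generic_vertex:
  fixes gs :: "'k::finite \<Rightarrow> ('n::finite) pseries" and P :: "real^'n"
  assumes sp: "strictly_positive P" and g0: "gs k0 \<nu>0 \<noteq> 0"
    and R: "\<And>S Q. R S Q \<longleftrightarrow> (\<forall>k. face S (gs k) = face Q (gs k))"
  shows "subdivision_vertex R P \<longleftrightarrow> dim (gens P gs) + 1 = CARD('n)"
proof -
  define G where "G = gens P gs"
  have nnP: "nonneg_weight P" using sp by (auto simp: nonneg_weight_def strictly_positive_def less_imp_le)
  have P0: "P \<noteq> 0"
  proof
    assume "P = 0" thus False using sp by (simp add: strictly_positive_def)
  qed
  have dimP: "dim {P} = 1" using P0 by (simp add: dim_singleton)
  have perpP: "\<forall>x\<in>G. P \<bullet> x = 0" unfolding G_def gens_def using perp_P by blast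
  have "dim G + dim {P} \<le> CARD('n)"
    by (rule orth_dim) (use perpP in \<open>auto simp: inner_commute\<close>)
  hence Gdim: "dim G + 1 \<le> CARD('n)" using dimP by simp
  have Rscale: "R S (t *\<^sub>R P) = R S P" if "0 < t" for S t
    by (simp add: R face_scale[OF that])
  show ?thesis unfolding G_def[symmetric]
  proof
    assume "subdivision_vertex R P"
    then obtain Q where Q: "nonneg_weight Q" "closure (equiv_class R Q) = {t *\<^sub>R P |t. 0 \<le> t}"
      unfolding subdivision_vertex_def by blast
    have "Q \<in> equiv_class R Q" using Q(1) R by (simp add: equiv_class_def)
    hence "Q \<in> {t *\<^sub>R P |t. 0 \<le> t}" using closure_subset Q(2) by blast
    then obtain t where t: "Q = t *\<^sub>R P" "0 \<le> t" by blast
    have "t \<noteq> 0"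
    proof
      assume "t = 0"
      have "equiv_class R Q \<subseteq> {0}"
      proof
        fix S assume "S \<in> equiv_class R Q"
        hence "nonneg_weight S" "face S (gs k0) = face 0 (gs k0)"
          using R t \<open>t = 0\<close> by (auto simp: equiv_class_def)
        hence "S = 0" using zero_of_face[of "gs k0" \<nu>0 S] g0 by blast
        thus "S \<in> {0}" by simp
      qed
      hence "closure (equiv_class R Q) \<subseteq> {0}"
        by (metis closure_closed closed_singleton closure_mono)
      moreover have "P \<in> {t *\<^sub>R P |t. 0 \<le> t}" by (auto intro: exI[of _ 1])
      ultimately show False using Q(2) P0 by blast
    qed
    hence tpos: "0 < t" using t(2) by simp
    have "equiv_class R Q = equiv_class R P" using Rscale[OF tpos] t(1) by (simp add: equiv_class_def)
    hence cls: "equiv_class R P \<subseteq> {t *\<^sub>R P|t. 0 \<le> t}" using Q(2) closure_subset by blast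
    have "\<not> dim G + 1 < CARD('n)"
    proof
      assume lt: "dim G + 1 < CARD('n)"
      have "dim (insert P G) \<le> dim G + 1" by (simp add: dim_insert)
      hence dl: "dim (insert P G) < CARD('n)" using lt by linarith
      have "span (insert P G) \<noteq> UNIV"
      proof
        assume "span (insert P G) = UNIV"
        hence "dim (insert P G) = dim (UNIV :: (real^'n) set)" by (metis dim_span)
        thus False using dl by (simp add: dim_UNIV)
      qed
      then obtain w0 where w0: "w0 \<notin> span (insert P G)" by blast
      obtain y z where yz: "y \<in> span G" "\<And>w. w \<in> span G \<Longrightarrow> orthogonal z w" "w0 = y + z"
        by (rule orthogonal_subspace_decomp_exists[of G w0]) blast
      have znot: "z \<notin> span {P}"
      proof
        assume "z \<in> span {P}"
        hence "z \<in> span (insert P G)" by (rule span_mono[THEN subsetD, rotated]) auto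
        moreover have "y \<in> span (insert P G)" using yz(1) by (rule span_mono[THEN subsetD, rotated]) auto
        ultimately have "w0 \<in> span (insert P G)" using yz(3) by (simp add: span_add)
        thus False using w0 by simp
      qed
      have zG: "\<forall>x\<in>G. z \<bullet> x = 0" using yz(2) span_base by (auto simp: orthogonal_def)
      have "((\<lambda>t. P + t *\<^sub>R z) \<longlongrightarrow> P + 0 *\<^sub>R z) (at_right 0)"
        by (intro tendsto_intros)
      hence lim: "filterlim (\<lambda>t. P + t *\<^sub>R z) (nhds P) (at_right (0::real))" by simp
      have "\<forall>\<^sub>F S in nhds P. \<forall>k. strictly_positive S \<and> minset S (gs k) \<subseteq> minset P (gs k)"
        by (intro eventually_all_finite minset_local[OF sp])
      hence ev1: "\<forall>\<^sub>F t in at_right (0::real). \<forall>k. strictly_positive (P + t *\<^sub>R z) \<and>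
          minset (P + t *\<^sub>R z) (gs k) \<subseteq> minset P (gs k)"
        using lim unfolding filterlim_iff by blast
      have "\<forall>\<^sub>F t in at_right (0::real). 0 < t \<and> (\<forall>k. strictly_positive (P + t *\<^sub>R z) \<and>
          minset (P + t *\<^sub>R z) (gs k) \<subseteq> minset P (gs k))"
        using eventually_at_right_less ev1 by (rule eventually_conj)
      then obtain t where tt: "0 < t" "\<And>k. strictly_positive (P + t *\<^sub>R z)"
          "\<And>k. minset (P + t *\<^sub>R z) (gs k) \<subseteq> minset P (gs k)"
        using eventually_happens'[OF trivial_limit_at_right_real] by blast
      define S where "S = P + t *\<^sub>R z"
      have spS: "strictly_positive S" using tt(2) S_def by blast
      have "face S (gs k) = face P (gs k)" for k
      proof -
        have "\<forall>a\<in>minset P (gs k). \<forall>b\<in>minset P (gs k). S \<bullet> expo a = S \<bullet> expo b"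
        proof (intro ballI)
          fix a b assume ab: "a \<in> minset P (gs k)" "b \<in> minset P (gs k)"
          hence "expo a - expo b \<in> G" unfolding G_def gens_def by blast
          hence "P \<bullet> (expo a - expo b) = 0" "z \<bullet> (expo a - expo b) = 0" using perpP zG by auto
          hence "S \<bullet> (expo a - expo b) = 0" unfolding S_def by (simp add: inner_add_left)
          thus "S \<bullet> expo a = S \<bullet> expo b" by (simp add: inner_diff_right)
        qed
        hence "minset S (gs k) = minset P (gs k)" using minset_eq[OF spS] tt(3) S_def by blast
        thus ?thesis using face_sp[OF spS] face_sp[OF sp] by simp
      qed
      moreover have "nonneg_weight S" using spS by (auto simp: nonneg_weight_def strictly_positive_def less_imp_le)
      ultimately have "S \<in> equiv_class R P" using R by (simp add: equiv_class_def)
      then obtain c where c: "S = c *\<^sub>R P" using cls by blast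
      hence "t *\<^sub>R z = (c - 1) *\<^sub>R P" unfolding S_def by (simp add: algebra_simps)
      hence "z = ((c - 1) / t) *\<^sub>R P" using tt(1) by (metis (no_types, lifting) divide_inverse_commute
          less_numeral_extra(3) scaleR_scaleR right_inverse scaleR_one vector_fraction_eq_iff)
      hence "z \<in> span {P}" unfolding span_singleton by blast
      thus False using znot by simp
    qed
    thus "dim G + 1 = CARD('n)" using Gdim by linarith
  next
    assume eqd: "dim G + 1 = CARD('n)"
    have cl: "equiv_class R P = {t *\<^sub>R P | t. 0 < t}"
    proof (intro set_eqI iffI)
      fix S assume "S \<in> equiv_class R P"
      hence nn: "nonneg_weight S" and eq: "\<forall>k. face S (gs k) = face P (gs k)"
        using R by (auto simp: equiv_class_def)
      have spS: "strictly_positive S" using sp_of_face[of P "gs k0" \<nu>0 S] sp g0 nn eq by blast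
      have perpS: "\<forall>x\<in>G. S \<bullet> x = 0" unfolding G_def gens_def using perp_S[OF sp] eq by blast
      have "S \<in> span {P}"
      proof (rule ccontr)
        assume "S \<notin> span {P}"
        hence "dim {S, P} = 2" using dimP by (simp add: dim_insert)
        moreover have "dim G + dim {S, P} \<le> CARD('n)"
          by (rule orth_dim) (use perpS perpP in \<open>auto simp: inner_commute\<close>)
        ultimately show False using eqd by simp
      qed
      then obtain c where c: "S = c *\<^sub>R P" by (auto simp: span_singleton)
      obtain i :: 'n where True by simp
      have "0 < S$i" "0 < P$i" using spS sp by (auto simp: strictly_positive_def)
      hence "0 < c" using c by (simp add: zero_less_mult_iff)
      thus "S \<in> {t *\<^sub>R P | t. 0 < t}" using c by blast
    next
      fix S assume "S \<in> {t *\<^sub>R P | t. 0 < t}"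
      then obtain t where t: "S = t *\<^sub>R P" "0 < t" by blast
      have "nonneg_weight S" using t nnP by (auto simp: nonneg_weight_def)
      moreover have "\<forall>k. face S (gs k) = face P (gs k)"
        unfolding t(1) using face_scale[OF t(2)] by (intro allI) assumption
      hence "R S P" using R by simp
      ultimately show "S \<in> equiv_class R P" by (simp add: equiv_class_def)
    qed
    have "closure (equiv_class R P) = {t *\<^sub>R P |t. 0 \<le> t}" using cl ray_closure[OF P0] by simp
    thus "subdivision_vertex R P"
      unfolding subdivision_vertex_def using P0 nnP by blast
  qed
qed



lemma span_diffs:
  assumes "e \<in> E"
  shows "span ((\<lambda>x. x - e) ` E) = span {x - y | x y. x \<in> E \<and> y \<in> E}"
proof (rule span_eq[THEN iffD2], intro conjI subsetI)
  fix u assume "u \<in> (\<lambda>x. x - e) ` E"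
  then obtain x where x: "x \<in> E" "u = x - e" by blast
  hence "u \<in> {x - y | x y. x \<in> E \<and> y \<in> E}" using assms by blast
  thus "u \<in> span {x - y | x y. x \<in> E \<and> y \<in> E}" by (rule span_base)
next
  fix u assume "u \<in> {x - y | x y. x \<in> E \<and> y \<in> E}"
  then obtain x y where u: "u = x - y" "x \<in> E" "y \<in> E" by blast
  have "x - e \<in> (\<lambda>x. x - e) ` E" "y - e \<in> (\<lambda>x. x - e) ` E" using u by auto
  hence "x - e \<in> span ((\<lambda>x. x - e) ` E)" "y - e \<in> span ((\<lambda>x. x - e) ` E)"
    by (auto intro: span_base)
  hence "(x - e) - (y - e) \<in> span ((\<lambda>x. x - e) ` E)" by (rule span_diff)
  thus "u \<in> span ((\<lambda>x. x - e) ` E)" using u by simp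
qed

lemma aff_dim_hull_diffs:
  fixes E :: "(real^'n::finite) set"
  assumes "e \<in> E"
  shows "aff_dim (convex hull E) = int (dim {x - y | x y. x \<in> E \<and> y \<in> E})"
proof -
  have "aff_dim (convex hull E) = aff_dim E" by (rule aff_dim_convex_hull)
  also have "\<dots> = int (dim ((\<lambda>x. x - e) ` E))"
    by (rule aff_dim_eq_dim_subtract) (use assms in \<open>simp add: hull_inc\<close>)
  also have "dim ((\<lambda>x. x - e) ` E) = dim {x - y | x y. x \<in> E \<and> y \<in> E}"
  proof -
    have "dim ((\<lambda>x. x - e) ` E) = dim (span ((\<lambda>x. x - e) ` E))" by (simp only: dim_span)
    also have "\<dots> = dim (span {x - y | x y. x \<in> E \<and> y \<in> E})" by (simp only: span_diffs[OF assms])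
    also have "\<dots> = dim {x - y | x y. x \<in> E \<and> y \<in> E}" by (simp only: dim_span)
    finally show ?thesis .
  qed
  finally show ?thesis .
qed

lemma weight_part:
  fixes f :: "('n::finite \<Rightarrow> nat) \<Rightarrow> complex" and P :: "real^'n"
  assumes sp: "strictly_positive P" and f0: "f \<nu>0 \<noteq> 0"
  shows "subdivision_vertex (weight_equiv f) P \<longleftrightarrow> aff_dim (face P f) = int CARD('n) - 1"
proof -
  have gv: "subdivision_vertex (weight_equiv f) P \<longleftrightarrow> dim (gens P (\<lambda>_::unit. f)) + 1 = CARD('n)"
    by (rule generic_vertex[OF sp, of "\<lambda>_::unit. f" "()" \<nu>0]) (use f0 in \<open>auto simp: weight_equiv_def\<close>)
  obtain m where m: "m \<in> minset P f" using minset_ne(1)[of P f \<nu>0] sp f0 by blast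
  have "gens P (\<lambda>_::unit. f) = {x - y | x y. x \<in> expo ` minset P f \<and> y \<in> expo ` minset P f}"
    unfolding gens_def by auto
  moreover have "aff_dim (face P f) = int (dim {x - y | x y. x \<in> expo ` minset P f \<and> y \<in> expo ` minset P f})"
    unfolding face_sp[OF sp] by (rule aff_dim_hull_diffs) (use m in blast)
  ultimately have "aff_dim (face P f) = int (dim (gens P (\<lambda>_::unit. f)))" by simp
  thus ?thesis using gv by linarith
qed

lemma pderiv_at: "0 < \<nu> i \<Longrightarrow> pderiv_ps i f (\<nu>(i := \<nu> i - 1)) = of_nat (\<nu> i) * f \<nu>"
proof -
  assume h: "0 < \<nu> i"
  have m1: "\<nu> i - 1 + 1 = \<nu> i" using h by simp
  have upd: "(\<nu>(i := \<nu> i - 1))(i := \<nu> i) = \<nu>" by simp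
  show ?thesis unfolding pderiv_ps_def fun_upd_same m1 upd ..
qed

lemma sum_if_upd:
  fixes c :: "'i::finite \<Rightarrow> 'a::ab_group_add"
  shows "(\<Sum>i\<in>UNIV. if i = j then x else c i) = (\<Sum>i\<in>UNIV. c i) + (x - c j)"
proof -
  have "(\<Sum>i\<in>UNIV. if i = j then x else c i) = (\<Sum>i\<in>UNIV. c i + (if i = j then x - c j else 0))"
    by (rule sum.cong) auto
  also have "\<dots> = (\<Sum>i\<in>UNIV. c i) + (x - c j)" by (simp add: sum.distrib)
  finally show ?thesis .
qed

lemma hull_diff_span:
  assumes "e \<in> E" "u \<in> convex hull E" "\<forall>x\<in>E. x - e \<in> T"
  shows "u - e \<in> span T"
proof -
  have "u \<in> affine hull E" using assms(2) convex_hull_subset_affine_hull by blast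
  then obtain v where v: "u = e + v" "v \<in> span ((+) (- e) ` (E - {e}))"
    using affine_hull_span2[OF assms(1)] by blast
  have sub: "(+) (- e) ` (E - {e}) \<subseteq> T" using assms(3) by auto
  have "v \<in> span T" using span_mono[OF sub] v(2) by blast
  thus ?thesis using v(1) by simp
qed


definition jgs :: "('n::finite) pseries \<Rightarrow> 'n option \<Rightarrow> 'n pseries" where
  "jgs f k = (case k of None \<Rightarrow> f | Some i \<Rightarrow> pderiv_ps i f)"

lemma all_opt: "(\<forall>k. Q k) \<longleftrightarrow> Q None \<and> (\<forall>i. Q (Some i))"
  by (metis option.exhaust)

lemma jac_R: "jacobian_equiv f S Q \<longleftrightarrow> (\<forall>k. face S (jgs f k) = face Q (jgs f k))"
  unfolding jacobian_equiv_def all_opt[of "\<lambda>k. face S (jgs f k) = face Q (jgs f k)"]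
  by (simp add: jgs_def)

lemma jac_partA:
  fixes f :: "('n::finite \<Rightarrow> nat) \<Rightarrow> complex" and P :: "real^'n"
  assumes sp: "strictly_positive P" and f0: "f \<nu>0 \<noteq> 0"
    and fi: "\<forall>i. \<exists>\<nu>. pderiv_ps i f \<nu> \<noteq> 0"
  shows "aff_dim (jacobian_face_sum P f) = int (dim (gens P (jgs f)))"
proof -
  define E where "E k = expo ` minset P (jgs f k)" for k
  have supp: "\<exists>\<nu>. jgs f k \<nu> \<noteq> 0" for k
    using f0 fi by (cases k) (auto simp: jgs_def)
  have Ene: "E k \<noteq> {}" for k
  proof -
    obtain \<nu> where "jgs f k \<nu> \<noteq> 0" using supp by blast
    thus ?thesis using minset_ne(1)[of P "jgs f k" \<nu>] sp by (simp add: E_def)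
  qed
  define e where "e k = (SOME x. x \<in> E k)" for k
  have eE: "e k \<in> E k" for k unfolding e_def using Ene by (simp add: some_in_eq)
  have F: "face P (jgs f k) = convex hull (E k)" for k unfolding E_def by (rule face_sp[OF sp])
  have Fn: "face P f = convex hull (E None)" using F[of None] by (simp add: jgs_def)
  have Fs: "face P (pderiv_ps i f) = convex hull (E (Some i))" for i using F[of "Some i"] by (simp add: jgs_def)
  have EG: "x - y \<in> gens P (jgs f)" if "x \<in> E k" "y \<in> E k" for x y k
    using that unfolding E_def gens_def by blast
  define G where "G = jacobian_face_sum P f"
  define a0 where "a0 = e None + (\<Sum>i\<in>UNIV. e (Some i))"
  have memG: "x + (\<Sum>i\<in>UNIV. y i) \<in> G" if "x \<in> E None" "\<And>i. y i \<in> E (Some i)" for x y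
    unfolding G_def jacobian_face_sum_def Fn Fs using that by (blast intro: hull_inc)
  have a0G: "a0 \<in> G" unfolding a0_def by (rule memG) (rule eE)+
  have "aff_dim G = int (dim ((\<lambda>x. x - a0) ` G))"
    by (rule aff_dim_eq_dim_subtract) (use a0G in \<open>simp add: hull_inc\<close>)
  moreover have "span ((\<lambda>x. x - a0) ` G) = span (gens P (jgs f))"
  proof (rule span_eq[THEN iffD2], intro conjI subsetI)
    fix u assume "u \<in> (\<lambda>x. x - a0) ` G"
    then obtain x y where xy: "u = x + (\<Sum>i\<in>UNIV. y i) - a0" "x \<in> face P f"
      "\<forall>i. y i \<in> face P (pderiv_ps i f)"
      unfolding G_def jacobian_face_sum_def by blast
    have "x - e None \<in> span (gens P (jgs f))"
      by (rule hull_diff_span[OF eE]) (use xy(2) Fn EG eE in auto)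
    moreover have "y i - e (Some i) \<in> span (gens P (jgs f))" for i
      by (rule hull_diff_span[OF eE]) (use xy(3) Fs EG eE in auto)
    hence "(\<Sum>i\<in>UNIV. y i - e (Some i)) \<in> span (gens P (jgs f))" by (intro span_sum) auto
    ultimately have "(x - e None) + (\<Sum>i\<in>UNIV. y i - e (Some i)) \<in> span (gens P (jgs f))"
      by (rule span_add)
    moreover have "u = (x - e None) + (\<Sum>i\<in>UNIV. y i - e (Some i))"
      unfolding xy(1) a0_def by (simp add: sum_subtractf algebra_simps)
    ultimately show "u \<in> span (gens P (jgs f))" by simp
  next
    fix w assume "w \<in> gens P (jgs f)"
    then obtain k a b where ab: "w = expo a - expo b" "a \<in> minset P (jgs f k)" "b \<in> minset P (jgs f k)"
      unfolding gens_def by blast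
    have cl: "z - e k \<in> (\<lambda>x. x - a0) ` G" if "z \<in> E k" for z
    proof (cases k)
      case None
      have "z + (\<Sum>i\<in>UNIV. e (Some i)) \<in> G" by (rule memG) (use that None eE in auto)
      moreover have "z - e k = (z + (\<Sum>i\<in>UNIV. e (Some i))) - a0" unfolding a0_def None by simp
      ultimately show ?thesis by blast
    next
      case (Some j)
      define y where "y i = (if i = j then z else e (Some i))" for i
      have "e None + (\<Sum>i\<in>UNIV. y i) \<in> G" by (rule memG) (use that Some eE in \<open>auto simp: y_def\<close>)
      moreover have "(\<Sum>i\<in>UNIV. y i) = (\<Sum>i\<in>UNIV. e (Some i)) + (z - e (Some j))"
        unfolding y_def by (rule sum_if_upd)
      hence "z - e k = (e None + (\<Sum>i\<in>UNIV. y i)) - a0" unfolding a0_def Some by simp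
      ultimately show ?thesis by blast
    qed
    have "expo a \<in> E k" "expo b \<in> E k" using ab by (auto simp: E_def)
    hence "expo a - e k \<in> span ((\<lambda>x. x - a0) ` G)" "expo b - e k \<in> span ((\<lambda>x. x - a0) ` G)"
      using cl by (auto intro: span_base)
    hence "(expo a - e k) - (expo b - e k) \<in> span ((\<lambda>x. x - a0) ` G)" by (rule span_diff)
    thus "w \<in> span ((\<lambda>x. x - a0) ` G)" using ab by simp
  qed
  hence "dim ((\<lambda>x. x - a0) ` G) = dim (gens P (jgs f))" by (metis dim_span)
  ultimately show ?thesis unfolding G_def by simp
qed

lemma jac_partB:
  fixes f :: "('n::finite \<Rightarrow> nat) \<Rightarrow> complex" and P :: "real^'n"
  assumes sp: "strictly_positive P" and f0: "f \<nu>0 \<noteq> 0" and fz: "f (\<lambda>_. 0) = 0"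
    and fi: "\<forall>\<nu>. pderiv_ps i f \<nu> = 0"
  shows "jacobian_face_sum P f = {}" "dim (gens P (jgs f)) + 2 \<le> CARD('n)"
proof -
  have "pderiv_ps i f = (\<lambda>_. 0)" using fi by auto
  hence "face P (pderiv_ps i f) = {}" by (simp add: face_zero_fun)
  thus "jacobian_face_sum P f = {}" unfolding jacobian_face_sum_def by blast
  have suppi: "\<nu> i = 0" if "f \<nu> \<noteq> 0" for \<nu>
  proof (rule ccontr)
    assume "\<nu> i \<noteq> 0" hence "0 < \<nu> i" by simp
    hence "pderiv_ps i f (\<nu>(i := \<nu> i - 1)) \<noteq> 0" using pderiv_at[of \<nu> i f] that by simp
    thus False using fi by simp
  qed
  have mi: "a i = 0" if "a \<in> minset P (jgs f k)" for a k
  proof (cases k)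
    case None thus ?thesis using that suppi by (simp add: minset_def jgs_def)
  next
    case (Some j)
    hence pj: "pderiv_ps j f a \<noteq> 0" using that by (simp add: minset_def jgs_def)
    hence "j \<noteq> i" using fi by auto
    have "f (a(j := a j + 1)) \<noteq> 0" using pj by (simp add: pderiv_ps_def)
    hence "(a(j := a j + 1)) i = 0" by (rule suppi)
    thus ?thesis using \<open>j \<noteq> i\<close> by simp
  qed
  have perpA: "\<forall>x\<in>gens P (jgs f). x \<bullet> axis i 1 = 0"
  proof
    fix x assume "x \<in> gens P (jgs f)"
    then obtain k where "x \<in> {expo a - expo b | a b. a \<in> minset P (jgs f k) \<and> b \<in> minset P (jgs f k)}"
      unfolding gens_def by (rule UN_E)
    then obtain a b where ab: "x = expo a - expo b" "a \<in> minset P (jgs f k)" "b \<in> minset P (jgs f k)"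
      by blast
    have "x \<bullet> axis i 1 = x $ i" by (rule cart_eq_inner_axis[symmetric])
    also have "x $ i = 0" using mi[OF ab(2)] mi[OF ab(3)] unfolding ab(1) expo_def by simp
    finally show "x \<bullet> axis i 1 = 0" .
  qed
  have perpP: "\<forall>x\<in>gens P (jgs f). x \<bullet> P = 0"
  proof
    fix x assume "x \<in> gens P (jgs f)"
    then obtain k where "x \<in> {expo a - expo b | a b. a \<in> minset P (jgs f k) \<and> b \<in> minset P (jgs f k)}"
      unfolding gens_def by (rule UN_E)
    then obtain a b where ab: "x = expo a - expo b" "a \<in> minset P (jgs f k)" "b \<in> minset P (jgs f k)"
      by blast
    have "P \<bullet> x = 0" unfolding ab(1) by (rule perp_P[OF ab(2,3)])
    thus "x \<bullet> P = 0" by (simp only: inner_commute)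
  qed
  have "\<exists>j. j \<noteq> i"
  proof (rule ccontr)
    assume "\<not> (\<exists>j. j \<noteq> i)"
    hence allj: "\<forall>j. j = i" by blast
    have "\<nu>0 = (\<lambda>_. 0)"
    proof
      fix j
      have "j = i" using allj by blast
      thus "\<nu>0 j = 0" using suppi[OF f0] by simp
    qed
    thus False using f0 fz by simp
  qed
  then obtain j where "j \<noteq> i" by blast
  have P0: "P \<noteq> 0" using sp by (auto simp: strictly_positive_def)
  have "axis i (1::real) \<notin> span {P}"
  proof
    assume "axis i (1::real) \<in> span {P}"
    then obtain c where c: "axis i 1 = c *\<^sub>R P" by (auto simp: span_singleton)
    have "(axis i 1 :: real^'n) $ j = 0" using \<open>j \<noteq> i\<close> by (simp add: axis_def)
    moreover have "(c *\<^sub>R P) $ j = c * P$j" by simp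
    ultimately have "0 = c * P$j" using c by simp
    moreover have "P$j \<noteq> 0" using sp by (simp add: strictly_positive_def less_imp_neq[symmetric])
    ultimately have "c = 0" by simp
    hence "axis i (1::real) = 0" using c by simp
    thus False by (simp add: axis_eq_0_iff)
  qed
  hence "dim {axis i 1, P} = 2" using P0 by (simp add: dim_insert dim_singleton)
  moreover have "dim (gens P (jgs f)) + dim {axis i 1, P} \<le> CARD('n)"
    by (rule orth_dim) (use perpA perpP in auto)
  ultimately show "dim (gens P (jgs f)) + 2 \<le> CARD('n)" by simp
qed

lemma jac_part:
  fixes f :: "('n::finite \<Rightarrow> nat) \<Rightarrow> complex" and P :: "real^'n"
  assumes sp: "strictly_positive P" and f0: "f \<nu>0 \<noteq> 0" and fz: "f (\<lambda>_. 0) = 0"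
  shows "subdivision_vertex (jacobian_equiv f) P \<longleftrightarrow> aff_dim (jacobian_face_sum P f) = int CARD('n) - 1"
proof -
  have gv: "subdivision_vertex (jacobian_equiv f) P \<longleftrightarrow> dim (gens P (jgs f)) + 1 = CARD('n)"
    by (rule generic_vertex[OF sp, of "jgs f" None \<nu>0]) (use f0 in \<open>auto simp: jac_R jgs_def\<close>)
  show ?thesis
  proof (cases "\<forall>i. \<exists>\<nu>. pderiv_ps i f \<nu> \<noteq> 0")
    case True
    thus ?thesis using gv jac_partA[OF sp f0 True] by linarith
  next
    case False
    then obtain i where "\<forall>\<nu>. pderiv_ps i f \<nu> = 0" by blast
    note B = jac_partB[OF sp f0 fz this]
    have "0 < CARD('n)" by simp
    thus ?thesis using gv B by simp
  qed
qed


theorem proposition7: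
  fixes f :: "('n::finite \<Rightarrow> nat) \<Rightarrow> complex"
  assumes conv: "convergent_ps f"
    and f0: "f (\<lambda>_. 0) = 0"
  shows "(\<forall>P Q. nonneg_weight P \<and> nonneg_weight Q \<longrightarrow>
            (jacobian_equiv f P Q \<longrightarrow> weight_equiv f P Q) \<and>
            (weight_equiv f P Q \<and> (\<forall>i. \<exists>\<nu>. face_fun P f \<nu> \<noteq> 0 \<and> 0 < \<nu> i)
               \<longrightarrow> jacobian_equiv f P Q))
       \<and> (f \<noteq> (\<lambda>_. 0) \<longrightarrow> (\<forall>P. strictly_positive P \<longrightarrow>
            (subdivision_vertex (weight_equiv f) P \<longleftrightarrow>
               aff_dim (face P f) = int CARD('n) - 1) \<and>
            (subdivision_vertex (jacobian_equiv f) P \<longleftrightarrow>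
               aff_dim (jacobian_face_sum P f) = int CARD('n) - 1)))"
proof -
  have A: "\<forall>P Q. nonneg_weight P \<and> nonneg_weight Q \<longrightarrow>
            (jacobian_equiv f P Q \<longrightarrow> weight_equiv f P Q) \<and>
            (weight_equiv f P Q \<and> (\<forall>i. \<exists>\<nu>. face_fun P f \<nu> \<noteq> 0 \<and> 0 < \<nu> i)
               \<longrightarrow> jacobian_equiv f P Q)"
    by (intro allI impI) (rule part1)
  have B: "f \<noteq> (\<lambda>_. 0) \<longrightarrow> (\<forall>P. strictly_positive P \<longrightarrow>
            (subdivision_vertex (weight_equiv f) P \<longleftrightarrow>
               aff_dim (face P f) = int CARD('n) - 1) \<and>
            (subdivision_vertex (jacobian_equiv f) P \<longleftrightarrow>
               aff_dim (jacobian_face_sum P f) = int CARD('n) - 1))"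
  proof (intro impI allI)
    fix P :: "real^'n"
    assume fnz: "f \<noteq> (\<lambda>_. 0)" and sp: "strictly_positive P"
    obtain \<nu>0 where nz: "f \<nu>0 \<noteq> 0" using fnz by auto
    show "(subdivision_vertex (weight_equiv f) P \<longleftrightarrow>
               aff_dim (face P f) = int CARD('n) - 1) \<and>
            (subdivision_vertex (jacobian_equiv f) P \<longleftrightarrow>
               aff_dim (jacobian_face_sum P f) = int CARD('n) - 1)"
      using weight_part[of P f \<nu>0, OF sp nz] jac_part[of P f \<nu>0, OF sp nz f0] by blast
  qed
  show ?thesis using A B by blast
qed

end
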